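(* Let $(\mathfrak g_1,\eta_1,\omega_1)$ and $(\mathfrak g_2,\eta_2,\omega_2)$ be two $(2n+1)$-dimensional almost cosymplectic (respectively, $\alpha$-cosymplectic, for a fixed $\alpha\in\mathbb R$) Lie algebras with $d\eta_1=d\eta_2=0$, and for $i=1,2$ let $\mathfrak h_i=\ker\eta_i$, $\Omega_i=\omega_i|_{\mathfrak h_i\times\mathfrak h_i}$ and $D_i=\mathrm{ad}_{\xi_i}|_{\mathfrak h_i}$, where $\xi_i$ is the Reeb vector of $(\eta_i,\omega_i)$. Then $(\mathfrak g_1,\eta_1,\omega_1)$ and $(\mathfrak g_2,\eta_2,\omega_2)$ are isomorphic if and only if there exists an isomorphism $\psi:(\mathfrak h_1,\Omega_1)\to(\mathfrak h_2,\Omega_2)$ of almost symplectic Lie algebras such that $\psi\circ D_1=D_2\circ\psi$.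
   Context: For a Lie algebra, $d\eta(x,y)=-\eta([x,y])$ and $d\omega(x,y,z)=-\omega([x,y],z)-\omega([y,z],x)-\omega([z,x],y)$. An almost cosymplectic structure on a $(2n+1)$-dimensional Lie algebra $\mathfrak g$ is $(\eta,\omega)$, $\eta\in\mathfrak g^*$, $\omega$ a $2$-form, with $\eta\wedge\omega^n\neq0$; its Reeb vector $\xi$ is the unique element with $\eta(\xi)=1$, $\omega(\xi,\cdot)=0$; it is $\alpha$-cosymplectic if $d\eta=0$ and $d\omega=2\alpha\,\eta\wedge\omega$. When $d\eta=0$, $\ker\eta$ is a Lie subalgebra, $\Omega$ is almost symplectic (i.e. $\Omega^n\ne0$) and $D_i$ is a derivation. Two almost cosymplectic Lie algebras are isomorphic if there is a Lie algebra isomorphism $\Psi:\mathfrak g_1\to\mathfrak g_2$ with $\Psi^*\omega_2=\omega_1$ and $\eta_2\circ\Psi=\eta_1$. Two almost symplectic Lie algebras $(\mathfrak h_1,\Omega_1),(\mathfrak h_2,\Omega_2)$ are isomorphic via a Lie algebra isomorphism $\psi$ with $\psi^*\Omega_2=\Omega_1$. *)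

theory Defs
  imports "HOL-Analysis.Analysis"
begin

text \<open>Real Lie algebra structure on a finite-dimensional real vector space (a Euclidean
space type is used only as a carrier for a finite-dimensional real vector space).\<close>

definition lie_algebra :: "('a::real_vector \<Rightarrow> 'a \<Rightarrow> 'a) \<Rightarrow> bool" where
  "lie_algebra br \<longleftrightarrow> bilinear br \<and> (\<forall>x. br x x = 0) \<and>
     (\<forall>x y z. br x (br y z) + br y (br z x) + br z (br x y) = 0)"

definition two_form :: "('a::real_vector \<Rightarrow> 'a \<Rightarrow> real) \<Rightarrow> bool" where
  "two_form \<omega> \<longleftrightarrow> bilinear \<omega> \<and> (\<forall>x. \<omega> x x = 0)"

text \<open>The top-degree form \<eta> \<and> \<omega>^n evaluated on vectors v 0, ..., v (2n),
  up to a nonzero normalising constant (irrelevant for the condition \<noteq> 0).\<close>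
definition eta_wedge_omega_pow ::
  "('a::real_vector \<Rightarrow> real) \<Rightarrow> ('a \<Rightarrow> 'a \<Rightarrow> real) \<Rightarrow> nat \<Rightarrow> (nat \<Rightarrow> 'a) \<Rightarrow> real" where
  "eta_wedge_omega_pow \<eta> \<omega> n v =
     (\<Sum>p | p permutes {0..<2*n+1}.
        of_int (sign p) * \<eta> (v (p 0)) *
        (\<Prod>j<n. \<omega> (v (p (2*j+1))) (v (p (2*j+2)))))"

definition almost_cosymplectic ::
  "nat \<Rightarrow> ('a::real_vector \<Rightarrow> 'a \<Rightarrow> 'a) \<Rightarrow> ('a \<Rightarrow> real) \<Rightarrow> ('a \<Rightarrow> 'a \<Rightarrow> real) \<Rightarrow> bool" where
  "almost_cosymplectic n br \<eta> \<omega> \<longleftrightarrow> lie_algebra br \<and> linear \<eta> \<and> two_form \<omega> \<and>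
     (\<exists>v. eta_wedge_omega_pow \<eta> \<omega> n v \<noteq> 0)"

definition d_eta :: "('a \<Rightarrow> 'a \<Rightarrow> 'a) \<Rightarrow> ('a \<Rightarrow> real) \<Rightarrow> 'a \<Rightarrow> 'a \<Rightarrow> real" where
  "d_eta br \<eta> x y = - \<eta> (br x y)"

definition d_omega :: "('a \<Rightarrow> 'a \<Rightarrow> 'a) \<Rightarrow> ('a \<Rightarrow> 'a \<Rightarrow> real) \<Rightarrow> 'a \<Rightarrow> 'a \<Rightarrow> 'a \<Rightarrow> real" where
  "d_omega br \<omega> x y z = - \<omega> (br x y) z - \<omega> (br y z) x - \<omega> (br z x) y"

definition eta_wedge_omega :: "('a \<Rightarrow> real) \<Rightarrow> ('a \<Rightarrow> 'a \<Rightarrow> real) \<Rightarrow> 'a \<Rightarrow> 'a \<Rightarrow> 'a \<Rightarrow> real" where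
  "eta_wedge_omega \<eta> \<omega> x y z = \<eta> x * \<omega> y z + \<eta> y * \<omega> z x + \<eta> z * \<omega> x y"

definition alpha_cosymplectic ::
  "real \<Rightarrow> nat \<Rightarrow> ('a::real_vector \<Rightarrow> 'a \<Rightarrow> 'a) \<Rightarrow> ('a \<Rightarrow> real) \<Rightarrow> ('a \<Rightarrow> 'a \<Rightarrow> real) \<Rightarrow> bool" where
  "alpha_cosymplectic \<alpha> n br \<eta> \<omega> \<longleftrightarrow> almost_cosymplectic n br \<eta> \<omega> \<and>
     (\<forall>x y. d_eta br \<eta> x y = 0) \<and>
     (\<forall>x y z. d_omega br \<omega> x y z = 2 * \<alpha> * eta_wedge_omega \<eta> \<omega> x y z)"

definition reeb :: "('a \<Rightarrow> real) \<Rightarrow> ('a \<Rightarrow> 'a \<Rightarrow> real) \<Rightarrow> 'a" where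
  "reeb \<eta> \<omega> = (THE \<xi>. \<eta> \<xi> = 1 \<and> (\<forall>y. \<omega> \<xi> y = 0))"

definition acs_iso ::
  "('a::real_vector \<Rightarrow> 'a \<Rightarrow> 'a) \<Rightarrow> ('a \<Rightarrow> real) \<Rightarrow> ('a \<Rightarrow> 'a \<Rightarrow> real) \<Rightarrow>
   ('b::real_vector \<Rightarrow> 'b \<Rightarrow> 'b) \<Rightarrow> ('b \<Rightarrow> real) \<Rightarrow> ('b \<Rightarrow> 'b \<Rightarrow> real) \<Rightarrow> ('a \<Rightarrow> 'b) \<Rightarrow> bool" where
  "acs_iso br1 \<eta>1 \<omega>1 br2 \<eta>2 \<omega>2 \<Psi> \<longleftrightarrow> linear \<Psi> \<and> bij \<Psi> \<and>
     (\<forall>x y. \<Psi> (br1 x y) = br2 (\<Psi> x) (\<Psi> y)) \<and>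
     (\<forall>x y. \<omega>2 (\<Psi> x) (\<Psi> y) = \<omega>1 x y) \<and>
     (\<forall>x. \<eta>2 (\<Psi> x) = \<eta>1 x)"

text \<open>Isomorphism of almost symplectic Lie algebras (h1, \<Omega>1) \<rightarrow> (h2, \<Omega>2), where h_i are
  subalgebras given as subsets with the induced bracket and \<Omega>_i the restriction of \<omega>_i.\<close>
definition as_iso_on ::
  "'a set \<Rightarrow> ('a::real_vector \<Rightarrow> 'a \<Rightarrow> 'a) \<Rightarrow> ('a \<Rightarrow> 'a \<Rightarrow> real) \<Rightarrow>
   'b set \<Rightarrow> ('b::real_vector \<Rightarrow> 'b \<Rightarrow> 'b) \<Rightarrow> ('b \<Rightarrow> 'b \<Rightarrow> real) \<Rightarrow> ('a \<Rightarrow> 'b) \<Rightarrow> bool" where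
  "as_iso_on h1 br1 \<Omega>1 h2 br2 \<Omega>2 \<psi> \<longleftrightarrow>
     (\<forall>x\<in>h1. \<forall>y\<in>h1. \<psi> (x + y) = \<psi> x + \<psi> y) \<and>
     (\<forall>c. \<forall>x\<in>h1. \<psi> (c *\<^sub>R x) = c *\<^sub>R \<psi> x) \<and>
     bij_betw \<psi> h1 h2 \<and>
     (\<forall>x\<in>h1. \<forall>y\<in>h1. \<psi> (br1 x y) = br2 (\<psi> x) (\<psi> y)) \<and>
     (\<forall>x\<in>h1. \<forall>y\<in>h1. \<Omega>2 (\<psi> x) (\<psi> y) = \<Omega>1 x y)"

end

theory Submission
  imports Defs
begin

definition AF :: "((nat \<Rightarrow> 'a) \<Rightarrow> real) \<Rightarrow> nat \<Rightarrow> (nat \<Rightarrow> 'a) \<Rightarrow> real" where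
  "AF G m v = (\<Sum>p | p permutes {0..<m}. of_int (sign p) * G (v \<circ> p))"

lemma AF_repeat:
  assumes "a < m" "b < m" "a \<noteq> b" "v a = v b"
  shows "AF G m v = 0"
proof -
  let ?t = "Transposition.transpose a b"
  have tp: "?t permutes {0..<m}" using assms by (intro permutes_swap_id) auto
  have vt: "v \<circ> ?t = v" using assms(4) by (auto simp: fun_eq_iff Transposition.transpose_def)
  have "AF G m v = (\<Sum>p | p permutes {0..<m}. of_int (sign (?t \<circ> p)) * G (v \<circ> (?t \<circ> p)))"
    unfolding AF_def by (rule setum_permutations_compose_left[OF tp])
  also have "\<dots> = (\<Sum>p | p permutes {0..<m}. - (of_int (sign p) * G (v \<circ> p)))"
  proof (rule sum.cong[OF refl])
    fix p assume "p \<in> {p. p permutes {0..<m}}"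
    hence "permutation p" by (auto intro: permutes_imp_permutation)
    moreover have "permutation ?t" using tp by (auto intro: permutes_imp_permutation)
    ultimately have "sign (?t \<circ> p) = - sign p"
      using assms(3) by (simp add: sign_compose sign_swap_id)
    moreover have "v \<circ> (?t \<circ> p) = v \<circ> p" using vt by (simp add: o_assoc)
    ultimately show "of_int (sign (?t \<circ> p)) * G (v \<circ> (?t \<circ> p)) = - (of_int (sign p) * G (v \<circ> p))"
      by simp
  qed
  also have "\<dots> = - AF G m v" unfolding AF_def by (simp add: sum_negf)
  finally show ?thesis by simp
qed

lemma AF_perm:
  assumes s: "\<sigma> permutes {0..<m}"
  shows "AF G m (v \<circ> \<sigma>) = of_int (sign \<sigma>) * AF G m v"
proof -
  have iv: "inv \<sigma> permutes {0..<m}" using s by (rule permutes_inv)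
  have ps: "permutation \<sigma>" using s by (auto intro: permutes_imp_permutation)
  have "AF G m (v \<circ> \<sigma>) = (\<Sum>p | p permutes {0..<m}. of_int (sign (inv \<sigma> \<circ> p)) * G (v \<circ> \<sigma> \<circ> (inv \<sigma> \<circ> p)))"
    unfolding AF_def by (rule setum_permutations_compose_left[OF iv])
  also have "\<dots> = (\<Sum>p | p permutes {0..<m}. of_int (sign \<sigma>) * (of_int (sign p) * G (v \<circ> p)))"
  proof (rule sum.cong[OF refl])
    fix p assume "p \<in> {p. p permutes {0..<m}}"
    hence "permutation p" by (auto intro: permutes_imp_permutation)
    moreover have "permutation (inv \<sigma>)" using iv by (auto intro: permutes_imp_permutation)
    ultimately have "sign (inv \<sigma> \<circ> p) = sign \<sigma> * sign p"
      using ps by (simp add: sign_compose sign_inverse)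
    moreover have "v \<circ> \<sigma> \<circ> (inv \<sigma> \<circ> p) = v \<circ> p"
      using permutes_inv_o(1)[OF s] by (simp add: o_assoc[symmetric]) (simp add: o_assoc)
    ultimately show "of_int (sign (inv \<sigma> \<circ> p)) * G (v \<circ> \<sigma> \<circ> (inv \<sigma> \<circ> p)) =
       of_int (sign \<sigma>) * (of_int (sign p) * G (v \<circ> p))" by simp
  qed
  also have "\<dots> = of_int (sign \<sigma>) * AF G m v" unfolding AF_def by (simp add: sum_distrib_left)
  finally show ?thesis .
qed

lemma AF_local:
  assumes loc: "\<And>w w'. (\<forall>i<m. w i = w' i) \<Longrightarrow> G w = G w'"
    and ag: "\<forall>i<m. w i = w' i"
  shows "AF G m w = AF G m w'"
  unfolding AF_def
proof (rule sum.cong[OF refl])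
  fix p assume "p \<in> {p. p permutes {0..<m}}"
  hence "\<forall>i<m. (w \<circ> p) i = (w' \<circ> p) i" using ag permutes_in_image[of p "{0..<m}"] by auto
  thus "of_int (sign p) * G (w \<circ> p) = of_int (sign p) * G (w' \<circ> p)" using loc by metis
qed

lemma AF_linear:
  assumes lin: "\<And>w s. s < m \<Longrightarrow> linear (\<lambda>x. G (w(s:=x)))"
    and s: "s < m"
  shows "linear (\<lambda>x. AF G m (w(s:=x)))"
  unfolding AF_def
proof (rule real_vector.linear_compose_sum, intro ballI)
  fix p assume "p \<in> {p. p permutes {0..<m}}"
  hence p: "p permutes {0..<m}" by simp
  have e: "\<And>x. w(s:=x) \<circ> p = (w \<circ> p)(inv p s := x)"
    using permutes_inverses[OF p] by (auto simp: fun_eq_iff)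
  have "inv p s < m" using permutes_in_image[OF permutes_inv[OF p]] s by auto
  hence "linear (\<lambda>x. G ((w \<circ> p)(inv p s := x)))" by (rule lin)
  hence "linear (\<lambda>x. of_int (sign p) * G ((w \<circ> p)(inv p s := x)))"
    by (simp add: linear_iff algebra_simps)
  thus "linear (\<lambda>x. of_int (sign p) * G (w(s:=x) \<circ> p))" by (simp add: e)
qed

lemma AF_zero_basis:
  fixes G :: "(nat \<Rightarrow> 'a::real_vector) \<Rightarrow> real"
  assumes lin: "\<And>w s. s < m \<Longrightarrow> linear (\<lambda>x. G (w(s:=x)))"
    and loc: "\<And>w w'. (\<forall>i<m. w i = w' i) \<Longrightarrow> G w = G w'"
    and sp: "\<And>x. \<exists>c. x = (\<Sum>i<m. c i *\<^sub>R b i)"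
    and z: "AF G m b = 0"
  shows "AF G m w = 0"
proof -
  have Q: "\<forall>w. (\<forall>j. k \<le> j \<and> j < m \<longrightarrow> w j \<in> b ` {..<m}) \<longrightarrow> AF G m w = 0" for k
  proof (induction k)
    case 0
    show ?case
    proof (intro allI impI)
      fix w assume hw: "\<forall>j. 0 \<le> j \<and> j < m \<longrightarrow> w j \<in> b ` {..<m}"
      define f where "f j = (SOME i. i < m \<and> w j = b i)" for j
      have f: "f j < m \<and> w j = b (f j)" if "j < m" for j
        unfolding f_def by (rule someI_ex) (use hw that in auto)
      show "AF G m w = 0"
      proof (cases "inj_on f {0..<m}")
        case False
        then obtain a c where "a < m" "c < m" "a \<noteq> c" "f a = f c" unfolding inj_on_def by auto
        then show ?thesis using f by (intro AF_repeat[of a m c]) auto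
      next
        case True
        define \<sigma> where "\<sigma> j = (if j < m then f j else j)" for j
        have io: "inj_on \<sigma> {0..<m}" using True unfolding inj_on_def \<sigma>_def by auto
        have im: "\<sigma> ` {0..<m} \<subseteq> {0..<m}" using f unfolding \<sigma>_def by auto
        have "\<sigma> ` {0..<m} = {0..<m}" using endo_inj_surj[OF _ im io] by simp
        hence "bij_betw \<sigma> {0..<m} {0..<m}" using io by (simp add: bij_betw_def)
        hence sp: "\<sigma> permutes {0..<m}" by (rule bij_imp_permutes) (simp add: \<sigma>_def)
        have "AF G m w = AF G m (b \<circ> \<sigma>)"
          by (rule AF_local[OF loc]) (use f in \<open>auto simp: \<sigma>_def\<close>)
        also have "\<dots> = 0" using AF_perm[OF sp, of G b] z by simp
        finally show ?thesis .
      qed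
    qed
  next
    case (Suc k)
    show ?case
    proof (intro allI impI)
      fix w assume hw: "\<forall>j. Suc k \<le> j \<and> j < m \<longrightarrow> w j \<in> b ` {..<m}"
      show "AF G m w = 0"
      proof (cases "k < m")
        case False
        thus ?thesis using Suc.IH hw by auto
      next
        case True
        obtain c where c: "w k = (\<Sum>i<m. c i *\<^sub>R b i)" using sp by blast
        have L: "linear (\<lambda>x. AF G m (w(k:=x)))" by (rule AF_linear[OF lin True])
        have "AF G m w = AF G m (w(k := (\<Sum>i<m. c i *\<^sub>R b i)))" using c by (metis fun_upd_triv)
        also have "\<dots> = (\<Sum>i<m. c i * AF G m (w(k := b i)))"
          by (simp only: real_vector.linear_sum[OF L] linear_cmul[OF L] real_scaleR_def)
        also have "\<dots> = 0"
        proof (rule sum.neutral, intro ballI)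
          fix i assume "i \<in> {..<m}"
          hence "AF G m (w(k := b i)) = 0" using Suc.IH hw
            by (metis fun_upd_apply image_eqI le_eq_less_or_eq Suc_le_eq)
          thus "c i * AF G m (w(k := b i)) = 0" by simp
        qed
        finally show ?thesis .
      qed
    qed
  qed
  show ?thesis using Q[of m] by auto
qed

definition gT :: "('a \<Rightarrow> real) \<Rightarrow> ('a \<Rightarrow> 'a \<Rightarrow> real) \<Rightarrow> nat \<Rightarrow> (nat \<Rightarrow> 'a) \<Rightarrow> real" where
  "gT \<eta> \<omega> n w = \<eta> (w 0) * (\<Prod>j<n. \<omega> (w (2*j+1)) (w (2*j+2)))"

lemma ewop_AF: "eta_wedge_omega_pow \<eta> \<omega> n v = AF (gT \<eta> \<omega> n) (2*n+1) v"
  unfolding eta_wedge_omega_pow_def AF_def gT_def by (simp add: mult.assoc)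

lemma gT_loc: "(\<forall>i<2*n+1. w i = w' i) \<Longrightarrow> gT \<eta> \<omega> n w = gT \<eta> \<omega> n w'"
  unfolding gT_def by (intro arg_cong2[where f="(*)"] prod.cong) auto

lemma prod_split_at:
  fixes f :: "nat \<Rightarrow> real"
  assumes "j0 < n"
  shows "(\<Prod>j<n. f j) = f j0 * (\<Prod>j\<in>{..<n}-{j0}. f j)"
  using assms by (simp add: prod.remove)

lemma gT_lin:
  fixes \<eta> :: "'a::real_vector \<Rightarrow> real"
  assumes l: "linear \<eta>" and b: "bilinear \<omega>" and s: "s < 2*n+1"
  shows "linear (\<lambda>x. gT \<eta> \<omega> n (w(s:=x)))"
proof (cases "s = 0")
  case True
  have "gT \<eta> \<omega> n (w(s:=x)) = \<eta> x * (\<Prod>j<n. \<omega> (w (2*j+1)) (w (2*j+2)))" for x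
    unfolding gT_def using True by simp
  thus ?thesis using l by (simp add: linear_iff algebra_simps)
next
  case False
  define j0 where "j0 = (s - 1) div 2"
  have j0: "j0 < n" using s False unfolding j0_def by auto
  define R where "R = (\<Prod>j\<in>{..<n}-{j0}. \<omega> (w (2*j+1)) (w (2*j+2)))"
  have sj: "s = 2*j0+1 \<or> s = 2*j0+2" using False unfolding j0_def by presburger
  have eqR: "(\<Prod>j\<in>{..<n}-{j0}. \<omega> ((w(s:=x)) (2*j+1)) ((w(s:=x)) (2*j+2))) = R" for x
    unfolding R_def using sj by (intro prod.cong) auto
  have e: "gT \<eta> \<omega> n (w(s:=x)) = \<eta> (w 0) * (\<omega> ((w(s:=x)) (2*j0+1)) ((w(s:=x)) (2*j0+2)) * R)" for x
    by (simp only: gT_def prod_split_at[OF j0] eqR) (simp add: False)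
  have "linear (\<lambda>x. \<omega> ((w(s:=x)) (2*j0+1)) ((w(s:=x)) (2*j0+2)))"
    using sj b unfolding bilinear_def by auto
  hence "linear (\<lambda>x. \<eta> (w 0) * (\<omega> ((w(s:=x)) (2*j0+1)) ((w(s:=x)) (2*j0+2)) * R))"
    by (simp add: linear_iff algebra_simps)
  thus ?thesis by (simp add: e)
qed

lemma two_form_antisym: "two_form \<omega> \<Longrightarrow> \<omega> y x = - \<omega> x (y::'a::real_vector)"
proof -
  assume t: "two_form \<omega>"
  hence b: "bilinear \<omega>" and z: "\<And>x. \<omega> x x = 0" unfolding two_form_def by auto
  have l1: "\<omega> (x+y) z = \<omega> x z + \<omega> y z" for z
    using b unfolding bilinear_def using linear_add[of "\<lambda>x. \<omega> x z"] by blast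
  have l2: "\<omega> z (x+y) = \<omega> z x + \<omega> z y" for z
    using b unfolding bilinear_def using linear_add[of "\<omega> z"] by blast
  have "\<omega> (x+y) (x+y) = \<omega> x x + \<omega> x y + \<omega> y x + \<omega> y y"
    by (simp add: l1 l2)
  thus ?thesis using z by simp
qed

lemma gT_vanish:
  assumes t: "two_form \<omega>" and ex: "\<eta> x = 0" and ox: "\<forall>y. \<omega> x y = c * \<eta> y"
    and i0: "i0 < 2*n+1" "w i0 = x"
    and oth: "\<forall>i<2*n+1. i \<noteq> i0 \<and> i \<noteq> i1 \<longrightarrow> \<eta> (w i) = 0"
  shows "gT \<eta> \<omega> n w = 0"
proof (cases "\<eta> (w 0) = 0")
  case True thus ?thesis unfolding gT_def by simp
next
  case False
  have n0: "i0 \<noteq> 0" using i0(2) ex False by metis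
  hence "i1 = 0" using oth False by auto
  define j0 where "j0 = (i0 - 1) div 2"
  have j0: "j0 < n" using i0 n0 unfolding j0_def by auto
  have sj: "i0 = 2*j0+1 \<or> i0 = 2*j0+2" using n0 unfolding j0_def by presburger
  have "\<omega> (w (2*j0+1)) (w (2*j0+2)) = 0"
  proof (cases "i0 = 2*j0+1")
    case True
    hence "\<eta> (w (2*j0+2)) = 0" using oth \<open>i1 = 0\<close> j0 by auto
    thus ?thesis using True i0 ox by simp
  next
    case False
    hence F: "i0 = 2*j0+2" using sj by simp
    hence "\<eta> (w (2*j0+1)) = 0" using oth \<open>i1 = 0\<close> j0 by auto
    thus ?thesis using F i0 ox two_form_antisym[OF t, of "w (2*j0+1)" x] by simp
  qed
  hence "(\<Prod>j<n. \<omega> (w (2*j+1)) (w (2*j+2))) = 0" using j0 by (intro prod_zero) auto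
  thus ?thesis unfolding gT_def by simp
qed

lemma span_idx:
  fixes b :: "nat \<Rightarrow> 'a::real_vector"
  assumes "y \<in> span (b ` I)" "finite I"
  shows "\<exists>c. y = (\<Sum>i\<in>I. c i *\<^sub>R b i)"
  using assms(1)
proof (rule real_vector.span_induct_alt)
  show "\<exists>c. 0 = (\<Sum>i\<in>I. c i *\<^sub>R b i)" by (rule exI[of _ "\<lambda>_. 0"]) simp
next
  fix c0 x y assume "x \<in> b ` I" "\<exists>c. y = (\<Sum>i\<in>I. c i *\<^sub>R b i)"
  then obtain k c where k: "k \<in> I" "x = b k" and c: "y = (\<Sum>i\<in>I. c i *\<^sub>R b i)" by auto
  have "(\<Sum>i\<in>I. ((if i = k then c0 else 0) + c i) *\<^sub>R b i)
      = (\<Sum>i\<in>I. (if i = k then c0 *\<^sub>R b i else 0)) + (\<Sum>i\<in>I. c i *\<^sub>R b i)"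
    by (subst sum.distrib[symmetric]) (rule sum.cong, auto simp: scaleR_add_left)
  also have "\<dots> = c0 *\<^sub>R x + y" using k c assms(2) by (simp add: sum.delta)
  finally show "\<exists>c. c0 *\<^sub>R x + y = (\<Sum>i\<in>I. c i *\<^sub>R b i)" by metis
qed

lemma no_bad:
  fixes \<eta> :: "'a::euclidean_space \<Rightarrow> real"
  assumes dim: "DIM('a) = 2*n+1" and l: "linear \<eta>" and t: "two_form \<omega>"
    and nz: "\<exists>v. eta_wedge_omega_pow \<eta> \<omega> n v \<noteq> 0"
    and x0: "x \<noteq> 0" and ex: "\<eta> x = 0" and ox: "\<forall>y. \<omega> x y = c * \<eta> y"
  shows False
proof -
  let ?m = "2*n+1"
  let ?G = "gT \<eta> \<omega> n"
  have bil: "bilinear \<omega>" using t unfolding two_form_def by simp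
  obtain v0 where v0: "AF ?G ?m v0 \<noteq> 0" using nz by (auto simp: ewop_AF)
  obtain e0 where e0: "\<eta> e0 \<noteq> 0"
  proof (rule ccontr)
    assume "\<not> thesis"
    hence "\<forall>e. \<eta> e = 0" using that by blast
    hence "AF ?G ?m v0 = 0" unfolding AF_def gT_def by simp
    thus False using v0 by simp
  qed
  define e where "e = (1 / \<eta> e0) *\<^sub>R e0"
  have ee: "\<eta> e = 1" using e0 unfolding e_def by (simp add: linear_cmul[OF l])
  have xe: "x \<noteq> e" using ex ee by auto
  have ie: "independent {e}"
    using ee real_vector.independent_insert[of e "{}"] by (auto simp: linear_0[OF l])
  have "x \<notin> span {e}"
  proof
    assume "x \<in> span {e}"
    then obtain k where "x = k *\<^sub>R e" by (auto simp: real_vector.span_singleton)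
    hence "\<eta> x = k" using ee by (simp add: linear_cmul[OF l])
    hence "k = 0" using ex by simp
    thus False using x0 \<open>x = k *\<^sub>R e\<close> by simp
  qed
  hence ixe: "independent {x, e}" using ie xe by (simp add: real_vector.independent_insert)
  define B where "B = extend_basis {x, e}"
  have iB: "independent B" and sB: "span B = UNIV" and xeB: "{x,e} \<subseteq> B"
    unfolding B_def using real_vector.independent_extend_basis[OF ixe]
      real_vector.extend_basis_superset[OF ixe] real_vector.span_extend_basis[OF ixe] by auto
  have fB: "finite B" using iB by (rule finiteI_independent)
  have cB: "card B = ?m"
    using real_vector.dim_eq_card_independent[OF iB] real_vector.dim_span[of B] sB dim
    by (simp add: eucl.dim_UNIV)
  have "card {x, e} \<le> card B" using xeB fB by (rule card_mono[rotated])
  hence m2: "2 \<le> ?m" using xe cB by simp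
  define C where "C = B - {x, e}"
  have cC: "card C = ?m - 2" using cB xeB fB xe unfolding C_def by (simp add: card_Diff_subset)
  obtain h where h: "bij_betw h {0..<?m-2} C"
    using ex_bij_betw_nat_finite[of C] fB cC unfolding C_def by auto
  define b where "b k = (if k = 0 then x else if k = 1 then e else h (k-2) - \<eta> (h (k-2)) *\<^sub>R e)" for k
  have Bsub: "B \<subseteq> span (b ` {..<?m})"
  proof
    fix z assume z: "z \<in> B"
    show "z \<in> span (b ` {..<?m})"
    proof (cases "z = x \<or> z = e")
      case True
      hence "z = b 0 \<or> z = b 1" unfolding b_def by auto
      moreover have "0 \<in> {..<?m}" "1 \<in> {..<?m}" using m2 by auto
      ultimately show ?thesis by (auto intro: real_vector.span_base)
    next
      case False
      hence "z \<in> C" using z unfolding C_def by auto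
      then obtain k where k: "k < ?m - 2" "z = h k" using h unfolding bij_betw_def by auto
      have "b (k+2) = z - \<eta> z *\<^sub>R e" using k unfolding b_def by simp
      moreover have "k + 2 \<in> {..<?m}" "1 \<in> {..<?m}" using k m2 by auto
      ultimately have "b (k+2) \<in> span (b ` {..<?m})" "b 1 \<in> span (b ` {..<?m})"
        by (meson imageI real_vector.span_base)+
      moreover have "b 1 = e" unfolding b_def by simp
      ultimately have "b (k+2) \<in> span (b ` {..<?m})" "e \<in> span (b ` {..<?m})" by auto
      hence "b (k+2) + \<eta> z *\<^sub>R e \<in> span (b ` {..<?m})"
        by (intro real_vector.span_add real_vector.span_scale)
      thus ?thesis using \<open>b (k+2) = z - \<eta> z *\<^sub>R e\<close> by simp
    qed
  qed
  have sp: "\<exists>c. y = (\<Sum>i<?m. c i *\<^sub>R b i)" for y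
  proof -
    have "span B \<subseteq> span (b ` {..<?m})"
      using Bsub by (metis real_vector.span_minimal real_vector.subspace_span)
    hence "y \<in> span (b ` {..<?m})" using sB by auto
    thus ?thesis by (rule span_idx) simp
  qed
  have etab: "\<eta> (b k) = 0" if "2 \<le> k" for k
    using that ee unfolding b_def by (simp add: linear_diff[OF l] linear_cmul[OF l])
  have zb: "AF ?G ?m b = 0"
    unfolding AF_def
  proof (rule sum.neutral, intro ballI)
    fix p assume "p \<in> {p. p permutes {0..<?m}}"
    hence p: "p permutes {0..<?m}" by simp
    have "?G (b \<circ> p) = 0"
    proof (rule gT_vanish[OF t ex ox, of "inv p 0" n _ "inv p 1"])
      show "inv p 0 < ?m" using permutes_in_image[OF permutes_inv[OF p], of 0] by simp
      show "(b \<circ> p) (inv p 0) = x" using permutes_inverses(1)[OF p] unfolding b_def by simp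
      show "\<forall>i<?m. i \<noteq> inv p 0 \<and> i \<noteq> inv p 1 \<longrightarrow> \<eta> ((b \<circ> p) i) = 0"
      proof (intro allI impI)
        fix i assume "i < ?m" "i \<noteq> inv p 0 \<and> i \<noteq> inv p 1"
        hence "p i \<noteq> 0" "p i \<noteq> 1" using permutes_inverses(2)[OF p] by metis+
        thus "\<eta> ((b \<circ> p) i) = 0" using etab by simp
      qed
    qed
    thus "of_int (sign p) * ?G (b \<circ> p) = 0" by simp
  qed
  have "AF ?G ?m v0 = 0"
    by (rule AF_zero_basis[OF gT_lin[OF l bil] gT_loc sp zb]) auto
  thus False using v0 by simp
qed

lemma eta_nz:
  assumes nz: "\<exists>v. eta_wedge_omega_pow \<eta> \<omega> n v \<noteq> 0"
  shows "\<exists>e. \<eta> e \<noteq> 0"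
proof (rule ccontr)
  assume "\<not> ?thesis"
  hence "\<forall>e. \<eta> e = 0" by blast
  hence "\<forall>v. eta_wedge_omega_pow \<eta> \<omega> n v = 0" unfolding eta_wedge_omega_pow_def by simp
  thus False using nz by simp
qed

lemma reeb_unique_ex:
  fixes \<eta> :: "'a::euclidean_space \<Rightarrow> real"
  assumes dim: "DIM('a) = 2*n+1" and l: "linear \<eta>" and t: "two_form \<omega>"
    and nz: "\<exists>v. eta_wedge_omega_pow \<eta> \<omega> n v \<noteq> 0"
  shows "\<exists>!\<xi>. \<eta> \<xi> = 1 \<and> (\<forall>y. \<omega> \<xi> y = 0)"
proof -
  have bil: "bilinear \<omega>" using t unfolding two_form_def by simp
  have l1: "linear (\<lambda>x. \<omega> x y)" for y using bil unfolding bilinear_def by simp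
  have l2: "linear (\<omega> x)" for x using bil unfolding bilinear_def by simp
  have ex: "\<exists>\<xi>. \<eta> \<xi> = 1 \<and> (\<forall>y. \<omega> \<xi> y = 0)"
  proof (cases "\<exists>z. z \<noteq> 0 \<and> (\<forall>y. \<omega> z y = 0)")
    case True
    then obtain z where z: "z \<noteq> 0" "\<forall>y. \<omega> z y = 0" by blast
    have "\<eta> z \<noteq> 0"
    proof
      assume "\<eta> z = 0"
      thus False using no_bad[OF dim l t nz z(1), of 0] z(2) by simp
    qed
    hence "\<eta> ((1 / \<eta> z) *\<^sub>R z) = 1 \<and> (\<forall>y. \<omega> ((1 / \<eta> z) *\<^sub>R z) y = 0)"
      using z(2) by (simp add: linear_cmul[OF l] linear_cmul[OF l1])
    thus ?thesis by blast
  next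
    case False
    define M where "M x = (\<Sum>i\<in>Basis. \<omega> x i *\<^sub>R i)" for x
    define r where "r = (\<Sum>i\<in>Basis. \<eta> i *\<^sub>R i)"
    have Mi: "M x \<bullet> y = \<omega> x y" for x y
    proof -
      have "M x \<bullet> y = (\<Sum>i\<in>Basis. \<omega> x i * (i \<bullet> y))" unfolding M_def by (simp add: inner_sum_left)
      also have "\<dots> = \<omega> x (\<Sum>i\<in>Basis. (y \<bullet> i) *\<^sub>R i)"
        by (simp add: real_vector.linear_sum[OF l2] linear_cmul[OF l2] inner_commute mult.commute)
      also have "\<dots> = \<omega> x y" by (simp add: euclidean_representation)
      finally show ?thesis .
    qed
    have ri: "r \<bullet> y = \<eta> y" for y
    proof -
      have "r \<bullet> y = (\<Sum>i\<in>Basis. \<eta> i * (i \<bullet> y))" unfolding r_def by (simp add: inner_sum_left)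
      also have "\<dots> = \<eta> (\<Sum>i\<in>Basis. (y \<bullet> i) *\<^sub>R i)"
        by (simp add: real_vector.linear_sum[OF l] linear_cmul[OF l] inner_commute mult.commute)
      also have "\<dots> = \<eta> y" by (simp add: euclidean_representation)
      finally show ?thesis .
    qed
    have lM: "linear M"
      unfolding linear_iff M_def
      by (simp add: linear_add[OF l1] linear_cmul[OF l1] scaleR_add_left sum.distrib scaleR_sum_right)
    have "inj M"
    proof (rule injI)
      fix a c assume "M a = M c"
      hence "M (a - c) = 0" by (simp add: linear_diff[OF lM])
      hence "\<forall>y. \<omega> (a - c) y = 0" using Mi by (metis inner_zero_left)
      hence "a - c = 0" using False by blast
      thus "a = c" by simp
    qed
    hence "surj M" using eucl.linear_injective_imp_surjective[OF lM] by simp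
    then obtain x where x: "M x = r" by (metis surjD)
    have ox: "\<forall>y. \<omega> x y = 1 * \<eta> y" using Mi ri x by (metis mult_1)
    obtain e where e: "\<eta> e \<noteq> 0" using eta_nz[OF nz] by blast
    have "x \<noteq> 0"
    proof
      assume "x = 0"
      hence "\<omega> x e = 0" using linear_0[OF l1] by simp
      thus False using ox e by simp
    qed
    moreover have "\<eta> x = 0" using ox t unfolding two_form_def by (metis mult_1)
    ultimately show ?thesis using no_bad[OF dim l t nz _ _ ox] by blast
  qed
  moreover have "\<xi>1 = \<xi>2" if "\<eta> \<xi>1 = 1 \<and> (\<forall>y. \<omega> \<xi>1 y = 0)" "\<eta> \<xi>2 = 1 \<and> (\<forall>y. \<omega> \<xi>2 y = 0)" for \<xi>1 \<xi>2
  proof (rule ccontr)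
    assume "\<xi>1 \<noteq> \<xi>2"
    hence "\<xi>1 - \<xi>2 \<noteq> 0" by simp
    moreover have "\<eta> (\<xi>1 - \<xi>2) = 0" using that by (simp add: linear_diff[OF l])
    moreover have "\<forall>y. \<omega> (\<xi>1 - \<xi>2) y = 0 * \<eta> y" using that by (simp add: linear_diff[OF l1])
    ultimately show False using no_bad[OF dim l t nz] by blast
  qed
  ultimately show ?thesis by blast
qed

lemma reeb_props:
  fixes \<eta> :: "'a::euclidean_space \<Rightarrow> real"
  assumes "DIM('a) = 2*n+1" "almost_cosymplectic n br \<eta> \<omega>"
  shows "\<eta> (reeb \<eta> \<omega>) = 1" "\<forall>y. \<omega> (reeb \<eta> \<omega>) y = 0"
    "\<And>\<xi>. \<eta> \<xi> = 1 \<Longrightarrow> (\<forall>y. \<omega> \<xi> y = 0) \<Longrightarrow> \<xi> = reeb \<eta> \<omega>"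
proof -
  have u: "\<exists>!\<xi>. \<eta> \<xi> = 1 \<and> (\<forall>y. \<omega> \<xi> y = 0)"
    using assms unfolding almost_cosymplectic_def by (intro reeb_unique_ex) auto
  from theI'[OF u] show "\<eta> (reeb \<eta> \<omega>) = 1" "\<forall>y. \<omega> (reeb \<eta> \<omega>) y = 0"
    unfolding reeb_def by auto
  fix \<xi> assume "\<eta> \<xi> = 1" "\<forall>y. \<omega> \<xi> y = 0"
  thus "\<xi> = reeb \<eta> \<omega>" unfolding reeb_def by (intro sym[OF the1_equality[OF u]]) simp
qed

lemma bil_add_l: "bilinear f \<Longrightarrow> f (x + y) z = f x z + f y z"
  unfolding bilinear_def using linear_add by metis
lemma bil_add_r: "bilinear f \<Longrightarrow> f z (x + y) = f z x + f z y"
  unfolding bilinear_def using linear_add by metis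
lemma bil_scale_l: "bilinear f \<Longrightarrow> f (c *\<^sub>R x) z = c *\<^sub>R f x z"
  unfolding bilinear_def using linear_cmul by metis
lemma bil_scale_r: "bilinear f \<Longrightarrow> f z (c *\<^sub>R x) = c *\<^sub>R f z x"
  unfolding bilinear_def using linear_cmul by metis

lemma bil_antisym:
  assumes b: "bilinear f" and z: "\<And>x. f x x = 0"
  shows "f y x = - f x y"
proof -
  have "f (x+y) (x+y) = f x x + f x y + (f y x + f y y)"
    by (simp add: bil_add_l[OF b] bil_add_r[OF b])
  thus ?thesis using z by (simp add: eq_neg_iff_add_eq_0 add.commute)
qed

lemma rad_form:
  fixes \<omega> :: "'a::real_vector \<Rightarrow> 'a \<Rightarrow> real"
  assumes t: "two_form \<omega>" and r: "\<forall>y. \<omega> \<xi> y = 0"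
  shows "\<omega> (u + a *\<^sub>R \<xi>) (v + c *\<^sub>R \<xi>) = \<omega> u v"
proof -
  have b: "bilinear \<omega>" and z: "\<And>x. \<omega> x x = 0" using t unfolding two_form_def by auto
  have r2: "\<omega> y \<xi> = 0" for y using bil_antisym[OF b z, of y \<xi>] r by simp
  show ?thesis by (simp add: bil_add_l[OF b] bil_add_r[OF b] bil_scale_l[OF b] bil_scale_r[OF b] r r2)
qed

lemma br_expand:
  assumes l: "lie_algebra br"
  shows "br (h + a *\<^sub>R \<xi>) (k + c *\<^sub>R \<xi>) = br h k - c *\<^sub>R br \<xi> h + a *\<^sub>R br \<xi> k"
proof -
  have b: "bilinear br" and z: "\<And>x. br x x = 0" using l unfolding lie_algebra_def by auto
  have "br h \<xi> = - br \<xi> h" by (rule bil_antisym[OF b z])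
  thus ?thesis
    by (simp add: bil_add_l[OF b] bil_add_r[OF b] bil_scale_l[OF b] bil_scale_r[OF b] z algebra_simps)
qed

theorem mainTheorem8:
  fixes n :: nat
    and br1 :: "'a::euclidean_space \<Rightarrow> 'a \<Rightarrow> 'a" and \<eta>1 :: "'a \<Rightarrow> real" and \<omega>1 :: "'a \<Rightarrow> 'a \<Rightarrow> real"
    and br2 :: "'b::euclidean_space \<Rightarrow> 'b \<Rightarrow> 'b" and \<eta>2 :: "'b \<Rightarrow> real" and \<omega>2 :: "'b \<Rightarrow> 'b \<Rightarrow> real"
  assumes dim1: "DIM('a) = 2 * n + 1" and dim2: "DIM('b) = 2 * n + 1"
    and acs1: "almost_cosymplectic n br1 \<eta>1 \<omega>1"
    and acs2: "almost_cosymplectic n br2 \<eta>2 \<omega>2"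
    and closed1: "\<forall>x y. d_eta br1 \<eta>1 x y = 0"
    and closed2: "\<forall>x y. d_eta br2 \<eta>2 x y = 0"
  shows "(\<exists>\<Psi>. acs_iso br1 \<eta>1 \<omega>1 br2 \<eta>2 \<omega>2 \<Psi>) \<longleftrightarrow>
         (\<exists>\<psi>. as_iso_on {x. \<eta>1 x = 0} br1 \<omega>1 {x. \<eta>2 x = 0} br2 \<omega>2 \<psi> \<and>
               (\<forall>x\<in>{x. \<eta>1 x = 0}. \<psi> (br1 (reeb \<eta>1 \<omega>1) x) = br2 (reeb \<eta>2 \<omega>2) (\<psi> x)))"
proof -
  define \<xi>1 where "\<xi>1 = reeb \<eta>1 \<omega>1"
  define \<xi>2 where "\<xi>2 = reeb \<eta>2 \<omega>2"
  note r1 = reeb_props[OF dim1 acs1, folded \<xi>1_def]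
  note r2 = reeb_props[OF dim2 acs2, folded \<xi>2_def]
  have la1: "lie_algebra br1" and l1: "linear \<eta>1" and t1: "two_form \<omega>1"
    using acs1 unfolding almost_cosymplectic_def by auto
  have la2: "lie_algebra br2" and l2: "linear \<eta>2" and t2: "two_form \<omega>2"
    using acs2 unfolding almost_cosymplectic_def by auto
  have c1: "\<eta>1 (br1 x y) = 0" for x y using closed1 unfolding d_eta_def by simp
  have c2: "\<eta>2 (br2 x y) = 0" for x y using closed2 unfolding d_eta_def by simp
  show ?thesis unfolding \<xi>1_def[symmetric] \<xi>2_def[symmetric]
  proof
    assume "\<exists>\<Psi>. acs_iso br1 \<eta>1 \<omega>1 br2 \<eta>2 \<omega>2 \<Psi>"
    then obtain \<Psi> where P: "linear \<Psi>" "bij \<Psi>" "\<forall>x y. \<Psi> (br1 x y) = br2 (\<Psi> x) (\<Psi> y)"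
      "\<forall>x y. \<omega>2 (\<Psi> x) (\<Psi> y) = \<omega>1 x y" "\<forall>x. \<eta>2 (\<Psi> x) = \<eta>1 x"
      unfolding acs_iso_def by blast
    have "\<Psi> ` {x. \<eta>1 x = 0} = {x. \<eta>2 x = 0}"
    proof
      show "\<Psi> ` {x. \<eta>1 x = 0} \<subseteq> {x. \<eta>2 x = 0}" using P(5) by auto
      show "{x. \<eta>2 x = 0} \<subseteq> \<Psi> ` {x. \<eta>1 x = 0}"
      proof
        fix y assume "y \<in> {x. \<eta>2 x = 0}"
        moreover obtain x where "y = \<Psi> x" using P(2) unfolding bij_def by (metis surjD)
        ultimately show "y \<in> \<Psi> ` {x. \<eta>1 x = 0}" using P(5) by auto
      qed
    qed
    hence bb: "bij_betw \<Psi> {x. \<eta>1 x = 0} {x. \<eta>2 x = 0}"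
      using P(2) unfolding bij_betw_def bij_def by (auto intro: inj_on_subset)
    have "\<Psi> \<xi>1 = \<xi>2"
    proof (rule r2(3))
      show "\<eta>2 (\<Psi> \<xi>1) = 1" using P(5) r1(1) by simp
      show "\<forall>y. \<omega>2 (\<Psi> \<xi>1) y = 0"
      proof
        fix y obtain z where "y = \<Psi> z" using P(2) unfolding bij_def by (metis surjD)
        thus "\<omega>2 (\<Psi> \<xi>1) y = 0" using P(4) r1(2) by simp
      qed
    qed
    hence "as_iso_on {x. \<eta>1 x = 0} br1 \<omega>1 {x. \<eta>2 x = 0} br2 \<omega>2 \<Psi> \<and>
        (\<forall>x\<in>{x. \<eta>1 x = 0}. \<Psi> (br1 \<xi>1 x) = br2 \<xi>2 (\<Psi> x))"
      unfolding as_iso_on_def using P bb by (simp add: linear_add linear_cmul)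
    thus "\<exists>\<psi>. as_iso_on {x. \<eta>1 x = 0} br1 \<omega>1 {x. \<eta>2 x = 0} br2 \<omega>2 \<psi> \<and>
        (\<forall>x\<in>{x. \<eta>1 x = 0}. \<psi> (br1 \<xi>1 x) = br2 \<xi>2 (\<psi> x))" by blast
  next
    assume "\<exists>\<psi>. as_iso_on {x. \<eta>1 x = 0} br1 \<omega>1 {x. \<eta>2 x = 0} br2 \<omega>2 \<psi> \<and>
        (\<forall>x\<in>{x. \<eta>1 x = 0}. \<psi> (br1 \<xi>1 x) = br2 \<xi>2 (\<psi> x))"
    then obtain \<psi> where
      add: "\<And>x y. \<eta>1 x = 0 \<Longrightarrow> \<eta>1 y = 0 \<Longrightarrow> \<psi> (x + y) = \<psi> x + \<psi> y" and
      sc: "\<And>c x. \<eta>1 x = 0 \<Longrightarrow> \<psi> (c *\<^sub>R x) = c *\<^sub>R \<psi> x" and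
      bb: "bij_betw \<psi> {x. \<eta>1 x = 0} {x. \<eta>2 x = 0}" and
      pb: "\<And>x y. \<eta>1 x = 0 \<Longrightarrow> \<eta>1 y = 0 \<Longrightarrow> \<psi> (br1 x y) = br2 (\<psi> x) (\<psi> y)" and
      po: "\<And>x y. \<eta>1 x = 0 \<Longrightarrow> \<eta>1 y = 0 \<Longrightarrow> \<omega>2 (\<psi> x) (\<psi> y) = \<omega>1 x y" and
      pd: "\<And>x. \<eta>1 x = 0 \<Longrightarrow> \<psi> (br1 \<xi>1 x) = br2 \<xi>2 (\<psi> x)"
      unfolding as_iso_on_def mem_Collect_eq Ball_def by blast
    have pin: "\<eta>2 (\<psi> x) = 0" if "\<eta>1 x = 0" for x using bb that unfolding bij_betw_def by auto
    define P1 where "P1 x = x - \<eta>1 x *\<^sub>R \<xi>1" for x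
    have hP: "\<eta>1 (P1 x) = 0" for x unfolding P1_def using r1(1) by (simp add: linear_diff[OF l1] linear_cmul[OF l1])
    have dP: "x = P1 x + \<eta>1 x *\<^sub>R \<xi>1" for x unfolding P1_def by simp
    define \<Psi> where "\<Psi> x = \<psi> (P1 x) + \<eta>1 x *\<^sub>R \<xi>2" for x
    have Pe: "\<eta>2 (\<Psi> x) = \<eta>1 x" for x
      unfolding \<Psi>_def using pin[OF hP] r2(1) by (simp add: linear_add[OF l2] linear_cmul[OF l2])
    have P1h: "P1 x = x" if "\<eta>1 x = 0" for x unfolding P1_def using that by simp
    have lin: "linear \<Psi>"
    proof (rule linearI)
      fix x y
      have "P1 (x + y) = P1 x + P1 y" unfolding P1_def by (simp add: linear_add[OF l1] algebra_simps)
      thus "\<Psi> (x + y) = \<Psi> x + \<Psi> y"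
        unfolding \<Psi>_def using add[OF hP hP] by (simp add: linear_add[OF l1] algebra_simps)
    next
      fix c x
      have "P1 (c *\<^sub>R x) = c *\<^sub>R P1 x" unfolding P1_def by (simp add: linear_cmul[OF l1] algebra_simps)
      thus "\<Psi> (c *\<^sub>R x) = c *\<^sub>R \<Psi> x"
        unfolding \<Psi>_def using sc[OF hP] by (simp add: linear_cmul[OF l1] algebra_simps)
    qed
    have inj: "inj \<Psi>"
    proof (rule injI)
      fix x y assume e: "\<Psi> x = \<Psi> y"
      hence ee: "\<eta>1 x = \<eta>1 y" using Pe by metis
      hence "\<psi> (P1 x) = \<psi> (P1 y)" using e unfolding \<Psi>_def by simp
      hence "P1 x = P1 y" using bb hP unfolding bij_betw_def inj_on_def by auto
      thus "x = y" using dP[of x] dP[of y] ee by metis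
    qed
    have surj: "surj \<Psi>"
    proof (rule surjI)
      fix y
      define k where "k = y - \<eta>2 y *\<^sub>R \<xi>2"
      have "\<eta>2 k = 0" unfolding k_def using r2(1) by (simp add: linear_diff[OF l2] linear_cmul[OF l2])
      then obtain h where h: "\<eta>1 h = 0" "\<psi> h = k" using bb unfolding bij_betw_def by (metis (mono_tags, lifting) imageE mem_Collect_eq)
      define x where "x = h + \<eta>2 y *\<^sub>R \<xi>1"
      have ex: "\<eta>1 x = \<eta>2 y" unfolding x_def using h r1(1) by (simp add: linear_add[OF l1] linear_cmul[OF l1])
      have "P1 x = h" unfolding P1_def ex unfolding x_def by simp
      hence "\<Psi> x = y" unfolding \<Psi>_def ex by (simp add: h(2) k_def)
      thus "\<Psi> (SOME x. \<Psi> x = y) = y" by (rule someI)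
    qed
    have om: "\<omega>2 (\<Psi> x) (\<Psi> y) = \<omega>1 x y" for x y
    proof -
      have "\<omega>2 (\<Psi> x) (\<Psi> y) = \<omega>2 (\<psi> (P1 x)) (\<psi> (P1 y))"
        unfolding \<Psi>_def by (rule rad_form[OF t2 r2(2)])
      also have "\<dots> = \<omega>1 (P1 x) (P1 y)" by (rule po[OF hP hP])
      also have "\<dots> = \<omega>1 (P1 x + \<eta>1 x *\<^sub>R \<xi>1) (P1 y + \<eta>1 y *\<^sub>R \<xi>1)"
        by (rule rad_form[OF t1 r1(2), symmetric])
      finally show ?thesis using dP by metis
    qed
    have brk: "\<Psi> (br1 x y) = br2 (\<Psi> x) (\<Psi> y)" for x y
    proof -
      let ?a = "\<eta>1 x" and ?c = "\<eta>1 y" and ?h = "P1 x" and ?k = "P1 y"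
      have hh: "\<eta>1 ?h = 0" "\<eta>1 ?k = 0" by (rule hP)+
      have "br1 x y = br1 (?h + ?a *\<^sub>R \<xi>1) (?k + ?c *\<^sub>R \<xi>1)" using dP by metis
      also have "\<dots> = br1 ?h ?k - ?c *\<^sub>R br1 \<xi>1 ?h + ?a *\<^sub>R br1 \<xi>1 ?k" by (rule br_expand[OF la1])
      finally have bx0: "br1 x y = br1 ?h ?k - ?c *\<^sub>R br1 \<xi>1 ?h + ?a *\<^sub>R br1 \<xi>1 ?k" .
      define d where "d = - ?c"
      have bx: "br1 x y = br1 ?h ?k + (d *\<^sub>R br1 \<xi>1 ?h + ?a *\<^sub>R br1 \<xi>1 ?k)"
        unfolding bx0 d_def by simp
      have z1: "\<eta>1 (d *\<^sub>R br1 \<xi>1 ?h) = 0" "\<eta>1 (?a *\<^sub>R br1 \<xi>1 ?k) = 0"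
        by (simp only: linear_cmul[OF l1] c1, simp)+
      have z2: "\<eta>1 (d *\<^sub>R br1 \<xi>1 ?h + ?a *\<^sub>R br1 \<xi>1 ?k) = 0"
        using z1 by (simp add: linear_add[OF l1])
      have "\<Psi> (br1 x y) = \<psi> (br1 x y)" unfolding \<Psi>_def using P1h[OF c1] c1 by simp
      also have "\<dots> = \<psi> (br1 ?h ?k) + (d *\<^sub>R \<psi> (br1 \<xi>1 ?h) + ?a *\<^sub>R \<psi> (br1 \<xi>1 ?k))"
        unfolding bx by (simp only: add[OF c1 z2] add[OF z1] sc[OF c1])
      also have "\<dots> = br2 (\<psi> ?h) (\<psi> ?k) + (d *\<^sub>R br2 \<xi>2 (\<psi> ?h) + ?a *\<^sub>R br2 \<xi>2 (\<psi> ?k))"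
        by (simp only: pb[OF hh] pd[OF hh(1)] pd[OF hh(2)])
      also have "\<dots> = br2 (\<psi> ?h + ?a *\<^sub>R \<xi>2) (\<psi> ?k + ?c *\<^sub>R \<xi>2)"
        by (simp add: br_expand[OF la2] d_def)
      also have "\<dots> = br2 (\<Psi> x) (\<Psi> y)" unfolding \<Psi>_def ..
      finally show ?thesis .
    qed
    have "acs_iso br1 \<eta>1 \<omega>1 br2 \<eta>2 \<omega>2 \<Psi>"
      unfolding acs_iso_def using lin inj surj brk om Pe by (simp add: bij_def)
    thus "\<exists>\<Psi>. acs_iso br1 \<eta>1 \<omega>1 br2 \<eta>2 \<omega>2 \<Psi>" by blast
  qed
qed

end
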